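(* Under the standing assumptions, suppose $\varphi$ is lower semicontinuous on $X$. Let $\rho_k\to\infty$ and $\sigma_k\to0$ with $\rho_k,\sigma_k>0$, and let $x_k\in\arg\min_{x\in X}\varphi_{\rho_k,\sigma_k}(x)$ for each $k$. Then every accumulation point $\bar x$ of $\{x_k\}$ satisfies $\bar x\in\arg\min_{x\in X}\varphi(x)$. Moreover, if $x_{k_j}\to\bar x$ along a subsequence, then every accumulation point $\bar y$ of $\{y^*_{\rho_{k_j},\sigma_{k_j}}(x_{k_j})\}$ belongs to $\arg\max\{f(\bar x,y): y\in Y,\ c(\bar x,y)\le 0\}$.
   Context: Standing assumptions: $X\subset\mathbb{R}^n$ and $Y\subset\mathbb{R}^m$ are nonempty, convex and compact. $f:X\times Y\to\mathbb{R}$ is continuously differentiable with Lipschitz continuous gradient on $X\times Y$, $f(x,\cdot)$ concave on $Y$. $c=(c_1,\dots,c_p)$ has continuously differentiable components with Lipschitz gradients, each $c_i(x,\cdot)$ convex on $Y$. For every $x\in X$, $\Theta(x):=\{y\in Y: c(x,y)\le 0\}\neq\emptyset$. Notation: $[z]_+=\max\{z,0\}$ componentwise; $\varphi(x):=\max\{f(x,y): y\in\Theta(x)\}$; $\psi_{\rho,\sigma}(x,y):=f(x,y)-\frac{\rho}{2}\|[c(x,y)]_+\|^2-\frac{\sigma}{2}\|y\|^2$; $\varphi_{\rho,\sigma}(x):=\max_{y\in Y}\psi_{\rho,\sigma}(x,y)$; $y^*_{\rho,\sigma}(x)$ is the unique maximizer of $\psi_{\rho,\sigma}(x,\cdot)$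 over $Y$. *)

theory Defs
  imports "HOL-Analysis.Analysis"
begin

definition C11_on :: "('a::euclidean_space \<Rightarrow> real) \<Rightarrow> 'a set \<Rightarrow> bool" where
  "C11_on g S \<longleftrightarrow>
     (\<exists>U (g' :: 'a \<Rightarrow> 'a \<Rightarrow>\<^sub>L real). open U \<and> S \<subseteq> U \<and>
        (\<forall>z\<in>U. (g has_derivative blinfun_apply (g' z)) (at z)) \<and>
        continuous_on U g' \<and>
        (\<exists>L. \<forall>z\<in>S. \<forall>w\<in>S. norm (g' z - g' w) \<le> L * dist z w))"

definition lsc_on :: "'a::topological_space set \<Rightarrow> ('a \<Rightarrow> real) \<Rightarrow> bool" where
  "lsc_on X g \<longleftrightarrow> (\<forall>x\<in>X. \<forall>t < g x. eventually (\<lambda>z. t < g z) (at x within X))"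

definition Theta :: "'y set \<Rightarrow> ('x \<Rightarrow> 'y \<Rightarrow> real^'p) \<Rightarrow> 'x \<Rightarrow> 'y set" where
  "Theta Y c x = {y \<in> Y. \<forall>i. c x y $ i \<le> 0}"

definition phi :: "'y set \<Rightarrow> ('x \<Rightarrow> 'y \<Rightarrow> real) \<Rightarrow> ('x \<Rightarrow> 'y \<Rightarrow> real^'p) \<Rightarrow> 'x \<Rightarrow> real" where
  "phi Y f c x = Sup (f x ` Theta Y c x)"

definition psi :: "('x \<Rightarrow> 'y::real_normed_vector \<Rightarrow> real) \<Rightarrow> ('x \<Rightarrow> 'y \<Rightarrow> real^'p)
                   \<Rightarrow> real \<Rightarrow> real \<Rightarrow> 'x \<Rightarrow> 'y \<Rightarrow> real" where
  "psi f c \<rho> \<sigma> x y = f x y - \<rho> / 2 * (norm (\<chi> i. max (c x y $ i) 0))\<^sup>2 - \<sigma> / 2 * (norm y)\<^sup>2"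

definition phi_pen :: "'y::real_normed_vector set \<Rightarrow> ('x \<Rightarrow> 'y \<Rightarrow> real) \<Rightarrow> ('x \<Rightarrow> 'y \<Rightarrow> real^'p)
                   \<Rightarrow> real \<Rightarrow> real \<Rightarrow> 'x \<Rightarrow> real" where
  "phi_pen Y f c \<rho> \<sigma> x = Sup (psi f c \<rho> \<sigma> x ` Y)"

definition ystar :: "'y::real_normed_vector set \<Rightarrow> ('x \<Rightarrow> 'y \<Rightarrow> real) \<Rightarrow> ('x \<Rightarrow> 'y \<Rightarrow> real^'p)
                   \<Rightarrow> real \<Rightarrow> real \<Rightarrow> 'x \<Rightarrow> 'y" where
  "ystar Y f c \<rho> \<sigma> x = (THE y. y \<in> Y \<and> (\<forall>y'\<in>Y. psi f c \<rho> \<sigma> x y' \<le> psi f c \<rho> \<sigma> x y))"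

end

theory Submission
  imports Defs
begin
lemma C11_cont: "C11_on g S \<Longrightarrow> continuous_on S g"
  unfolding C11_on_def
  by (metis continuous_at_imp_continuous_on has_derivative_continuous subsetD)

lemma norm_pos_sq: "(norm (\<chi> i. max ((v::real^'p) $ i) 0))\<^sup>2 = (\<Sum>i\<in>UNIV. (max (v $ i) 0)\<^sup>2)"
  unfolding power2_norm_eq_inner by (simp add: inner_vec_def power2_eq_square)

lemma sq_avg: fixes a b :: real assumes "0 \<le> a" "0 \<le> b" "0 \<le> z" "z \<le> (a+b)/2"
  shows "z\<^sup>2 \<le> (a\<^sup>2 + b\<^sup>2)/2"
proof -
  have "z\<^sup>2 \<le> ((a+b)/2)\<^sup>2" using assms by (intro power_mono) auto
  also have "\<dots> \<le> (a\<^sup>2 + b\<^sup>2)/2" using sum_squares_ge_zero[of "a-b" 0]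
    by (simp add: power2_eq_square field_simps)
  finally show ?thesis .
qed

lemma norm_mid: fixes a b :: "'a::real_inner"
  shows "(norm ((1/2) *\<^sub>R a + (1/2) *\<^sub>R b))\<^sup>2 = ((norm a)\<^sup>2 + (norm b)\<^sup>2)/2 - (norm (a - b))\<^sup>2/4"
  by (simp add: power2_norm_eq_inner inner_simps inner_commute field_simps)

lemma ystar_prop:
  fixes Y :: "(real^'m) set" and f :: "'x \<Rightarrow> real^'m \<Rightarrow> real" and c :: "'x \<Rightarrow> real^'m \<Rightarrow> real^'p"
  assumes Y: "compact Y" "convex Y" "Y \<noteq> {}"
    and fc: "continuous_on Y (f x)" and cc: "\<forall>i. continuous_on Y (\<lambda>y. c x y $ i)"
    and fconc: "concave_on Y (f x)" and cconv: "\<forall>i. convex_on Y (\<lambda>y. c x y $ i)"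
    and rho: "\<rho> \<ge> 0" and sig: "\<sigma> > 0"
  shows "ystar Y f c \<rho> \<sigma> x \<in> Y \<and> (\<forall>y'\<in>Y. psi f c \<rho> \<sigma> x y' \<le> psi f c \<rho> \<sigma> x (ystar Y f c \<rho> \<sigma> x))"
proof -
  let ?P = "\<lambda>y. (\<Sum>i\<in>UNIV. (max (c x y $ i) 0)\<^sup>2)"
  let ?psi = "psi f c \<rho> \<sigma> x"
  have psi_eq: "\<And>y. ?psi y = f x y - \<rho>/2 * ?P y - \<sigma>/2 * (norm y)\<^sup>2"
    by (simp add: psi_def norm_pos_sq)
  have ccv: "continuous_on Y (c x)"
    using continuous_on_vec_lambda[of Y "\<lambda>i y. c x y $ i"] cc by (simp add: vec_lambda_eta)
  have cont: "continuous_on Y ?psi" unfolding psi_eq using fc ccv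
    by (intro continuous_intros) auto
  obtain y0 where y0: "y0 \<in> Y" "\<forall>y\<in>Y. ?psi y \<le> ?psi y0"
    using continuous_attains_sup[OF Y(1) Y(3) cont] by auto
  have uniq: "y1 = y0" if y1: "y1 \<in> Y" "\<forall>y\<in>Y. ?psi y \<le> ?psi y1" for y1
  proof (rule ccontr)
    assume ne: "y1 \<noteq> y0"
    define m where "m = (1/2) *\<^sub>R y1 + (1/2) *\<^sub>R y0"
    have m_eq: "m = (1 - 1/2) *\<^sub>R y1 + (1/2) *\<^sub>R y0" by (simp add: m_def)
    have mY: "m \<in> Y" using convexD[OF Y(2) y1(1) y0(1), of "1/2" "1/2"] by (simp add: m_def)
    have fm: "f x m \<ge> (f x y1 + f x y0)/2"
      using concave_onD[OF fconc, of "1/2" y1 y0] y1 y0 unfolding m_eq by simp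
    have pen: "(max (c x m $ i) 0)\<^sup>2 \<le> ((max (c x y1 $ i) 0)\<^sup>2 + (max (c x y0 $ i) 0)\<^sup>2)/2" for i
    proof -
      have "c x m $ i \<le> (c x y1 $ i + c x y0 $ i)/2"
        using convex_onD[OF cconv[rule_format, of i], of "1/2" y1 y0] y1 y0 unfolding m_eq by simp
      then have "max (c x m $ i) 0 \<le> (max (c x y1 $ i) 0 + max (c x y0 $ i) 0)/2" by auto
      then show ?thesis by (intro sq_avg) auto
    qed
    have Pm: "?P m \<le> (?P y1 + ?P y0)/2"
    proof -
      have "?P m \<le> (\<Sum>i\<in>UNIV. ((max (c x y1 $ i) 0)\<^sup>2 + (max (c x y0 $ i) 0)\<^sup>2)/2)"
        by (intro sum_mono pen)
      also have "\<dots> = (?P y1 + ?P y0)/2"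
        by (simp add: sum.distrib sum_divide_distrib[symmetric])
      finally show ?thesis .
    qed
    have nm: "(norm m)\<^sup>2 = ((norm y1)\<^sup>2 + (norm y0)\<^sup>2)/2 - (norm (y1 - y0))\<^sup>2/4"
      unfolding m_def by (rule norm_mid)
    have pos: "(norm (y1 - y0))\<^sup>2 > 0" using ne by simp
    have e: "?psi y1 = ?psi y0" using y1 y0 by (meson order_antisym)
    have "?psi m > (?psi y1 + ?psi y0)/2"
    proof -
      have "\<rho>/2 * ?P m \<le> \<rho>/2 * ((?P y1 + ?P y0)/2)" using Pm rho by (intro mult_left_mono) auto
      moreover have "\<sigma>/2 * (norm (y1 - y0))\<^sup>2/4 > 0" using pos sig by simp
      ultimately show ?thesis unfolding psi_eq nm using fm by (simp add: field_simps)
    qed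
    then show False using e y0 mY by auto
  qed
  have "\<exists>!y. y \<in> Y \<and> (\<forall>y'\<in>Y. ?psi y' \<le> ?psi y)" using y0 uniq by blast
  then show ?thesis unfolding ystar_def by (rule theI')
qed

theorem theorem2p4:
  fixes X :: "(real^'n) set" and Y :: "(real^'m) set"
    and f :: "real^'n \<Rightarrow> real^'m \<Rightarrow> real"
    and c :: "real^'n \<Rightarrow> real^'m \<Rightarrow> real^'p"
    and \<rho> \<sigma> :: "nat \<Rightarrow> real" and x :: "nat \<Rightarrow> real^'n"
  assumes X: "X \<noteq> {}" "convex X" "compact X"
    and Y: "Y \<noteq> {}" "convex Y" "compact Y"
    and f_smooth: "C11_on (\<lambda>z. f (fst z) (snd z)) (X \<times> Y)"
    and f_concave: "\<forall>x\<in>X. concave_on Y (f x)"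
    and c_smooth: "\<forall>i. C11_on (\<lambda>z. c (fst z) (snd z) $ i) (X \<times> Y)"
    and c_convex: "\<forall>x\<in>X. \<forall>i. convex_on Y (\<lambda>y. c x y $ i)"
    and feasible: "\<forall>x\<in>X. Theta Y c x \<noteq> {}"
    and lsc: "lsc_on X (phi Y f c)"
    and rho_pos: "\<forall>k. \<rho> k > 0" and rho_lim: "filterlim \<rho> at_top sequentially"
    and sigma_pos: "\<forall>k. \<sigma> k > 0" and sigma_lim: "\<sigma> \<longlonglongrightarrow> 0"
    and x_argmin: "\<forall>k. x k \<in> X \<and> (\<forall>x'\<in>X. phi_pen Y f c (\<rho> k) (\<sigma> k) (x k) \<le> phi_pen Y f c (\<rho> k) (\<sigma> k) x')"
  shows "(\<forall>xbar r. strict_mono r \<and> (x \<circ> r) \<longlonglongrightarrow> xbar \<longrightarrow>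
            xbar \<in> X \<and> (\<forall>x'\<in>X. phi Y f c xbar \<le> phi Y f c x'))
       \<and> (\<forall>xbar r. strict_mono r \<and> (x \<circ> r) \<longlonglongrightarrow> xbar \<longrightarrow>
            (\<forall>ybar s. strict_mono s \<and>
               ((\<lambda>j. ystar Y f c (\<rho> (r j)) (\<sigma> (r j)) (x (r j))) \<circ> s) \<longlonglongrightarrow> ybar \<longrightarrow>
               ybar \<in> Y \<and> (\<forall>i. c xbar ybar $ i \<le> 0) \<and>
               (\<forall>y\<in>Y. (\<forall>i. c xbar y $ i \<le> 0) \<longrightarrow> f xbar y \<le> f xbar ybar)))"
proof -
  have contf: "continuous_on (X \<times> Y) (\<lambda>z. f (fst z) (snd z))" using C11_cont f_smooth .
  have contc: "\<And>i. continuous_on (X \<times> Y) (\<lambda>z. c (fst z) (snd z) $ i)" using C11_cont c_smooth by blast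
  have fx_cont: "continuous_on Y (f z)" if "z \<in> X" for z
  proof -
    have "continuous_on Y (\<lambda>y. (\<lambda>w. f (fst w) (snd w)) (z, y))"
      by (rule continuous_on_compose2[OF contf]) (auto intro!: continuous_intros simp: that)
    then show ?thesis by simp
  qed
  have cx_cont: "continuous_on Y (\<lambda>y. c z y $ i)" if "z \<in> X" for z i
  proof -
    have "continuous_on Y (\<lambda>y. (\<lambda>w. c (fst w) (snd w) $ i) (z, y))"
      by (rule continuous_on_compose2[OF contc]) (auto intro!: continuous_intros simp: that)
    then show ?thesis by simp
  qed
  obtain M where M: "\<And>z y. z \<in> X \<Longrightarrow> y \<in> Y \<Longrightarrow> \<bar>f z y\<bar> \<le> M"
  proof -
    have "compact ((\<lambda>w. f (fst w) (snd w)) ` (X \<times> Y))"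
      using compact_continuous_image[OF contf compact_Times[OF X(3) Y(3)]] .
    then obtain a where "\<forall>v\<in>(\<lambda>w. f (fst w) (snd w)) ` (X \<times> Y). norm v \<le> a"
      using compact_imp_bounded bounded_iff by metis
    then show ?thesis using that[of a] by force
  qed
  obtain B2 where B2: "\<And>y. y \<in> Y \<Longrightarrow> (norm y)\<^sup>2 \<le> B2" "B2 \<ge> 0"
  proof -
    obtain B where B: "B > 0" "\<forall>y\<in>Y. norm y \<le> B"
      using compact_imp_bounded[OF Y(3)] bounded_pos by metis
    show ?thesis
    proof (rule that[of "B\<^sup>2"])
      fix y assume "y \<in> Y" then show "(norm y)\<^sup>2 \<le> B\<^sup>2" using B by (intro power_mono) auto
    qed simp
  qed
  define ys where "ys k z = ystar Y f c (\<rho> k) (\<sigma> k) z" for k z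
  define pp where "pp k z = phi_pen Y f c (\<rho> k) (\<sigma> k) z" for k z
  define ps where "ps k = psi f c (\<rho> k) (\<sigma> k)" for k
  define Pen where "Pen z y = (norm (\<chi> i. max (c z y $ i) 0))\<^sup>2" for z y
  have Pen_nn: "Pen z y \<ge> 0" for z y by (simp add: Pen_def)
  have psi_eq: "ps k z y = f z y - \<rho> k / 2 * Pen z y - \<sigma> k / 2 * (norm y)\<^sup>2" for k z y
    by (simp add: ps_def psi_def Pen_def)
  have ysP: "ys k z \<in> Y \<and> (\<forall>y\<in>Y. ps k z y \<le> ps k z (ys k z))" if "z \<in> X" for k z
  proof -
    have cc: "\<forall>i. continuous_on Y (\<lambda>y. c z y $ i)" using cx_cont[OF that] by blast
    show ?thesis
      unfolding ys_def ps_def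
      using ystar_prop[where Y=Y and f=f and x=z and c=c and \<rho>="\<rho> k" and \<sigma>="\<sigma> k",
        OF Y(3) Y(2) Y(1) fx_cont[OF that] cc bspec[OF f_concave that] bspec[OF c_convex that]] rho_pos sigma_pos
      by (simp add: less_imp_le)
  qed
  have pp_eq: "pp k z = ps k z (ys k z)" if "z \<in> X" for k z
    unfolding pp_def phi_pen_def ps_def[symmetric]
    by (rule cSup_eq_maximum) (use ysP[OF that, of k] in auto)
  have ps_le_f: "ps k z y \<le> f z y - \<rho> k / 2 * Pen z y" for k z y
    unfolding psi_eq using sigma_pos[rule_format, of k] by simp
  have ps_le_f2: "ps k z y \<le> f z y" for k z y
    using ps_le_f[of k z y] mult_nonneg_nonneg[OF less_imp_le[OF rho_pos[rule_format, of k]] Pen_nn[of z y]] by simp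
  have pp_f: "pp k z \<le> f z (ys k z)" if "z \<in> X" for k z
    using pp_eq[OF that] ps_le_f2 by simp
  have feas_pen: "Pen z y = 0" if "y \<in> Theta Y c z" for z y
  proof -
    have "(\<chi> i. max (c z y $ i) 0) = 0" using that by (simp add: Theta_def vec_eq_iff)
    then show ?thesis by (simp add: Pen_def)
  qed
  have pen0_feas: "\<forall>i. c z y $ i \<le> 0" if "Pen z y = 0" for z y
  proof -
    have "(\<chi> i. max (c z y $ i) 0) = 0" using that by (simp add: Pen_def)
    then show ?thesis by (simp add: vec_eq_iff) (metis max.absorb_iff2 max.commute order_refl)
  qed
  have bddf: "bdd_above (f z ` Theta Y c z)" if "z \<in> X" for z
    using M[OF that] by (intro bdd_aboveI2[of _ _ M]) (auto simp: Theta_def abs_le_iff)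
  have phi_ge: "f z y \<le> phi Y f c z" if "z \<in> X" "y \<in> Theta Y c z" for z y
    unfolding phi_def by (rule cSup_upper) (use that bddf in auto)
  have phi_le: "phi Y f c z \<le> pp k z + \<sigma> k / 2 * B2" if "z \<in> X" for k z
    unfolding phi_def
  proof (rule cSup_least)
    show "f z ` Theta Y c z \<noteq> {}" using feasible that by auto
    fix v assume "v \<in> f z ` Theta Y c z"
    then obtain y where y: "y \<in> Theta Y c z" "v = f z y" by auto
    have yY: "y \<in> Y" using y by (simp add: Theta_def)
    have "v = ps k z y + \<sigma> k / 2 * (norm y)\<^sup>2" using y feas_pen[OF y(1)] by (simp add: psi_eq)
    also have "\<dots> \<le> pp k z + \<sigma> k / 2 * B2"
      using pp_eq[OF that] ysP[OF that] yY B2(1)[OF yY] sigma_pos[rule_format, of k]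
      by (intro add_mono mult_left_mono) auto
    finally show "v \<le> pp k z + \<sigma> k / 2 * B2" .
  qed
  have Pen_bd: "Pen z (ys k z) \<le> (4 * M + \<sigma> k * B2) * inverse (\<rho> k)" if zX: "z \<in> X" for k z
  proof -
    obtain yf where yf: "yf \<in> Theta Y c z" using feasible zX by auto
    have yfY: "yf \<in> Y" using yf by (simp add: Theta_def)
    have "ps k z yf = f z yf - \<sigma> k / 2 * (norm yf)\<^sup>2" using feas_pen[OF yf] by (simp add: psi_eq)
    also have "\<dots> \<ge> - M - \<sigma> k / 2 * B2"
      using M[OF zX yfY] B2(1)[OF yfY] sigma_pos[rule_format, of k]
      by (smt (verit) mult_left_mono half_gt_zero)
    finally have a: "ps k z yf \<ge> - M - \<sigma> k / 2 * B2" .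
    have w: "ys k z \<in> Y" using ysP[OF zX] by auto
    have b: "ps k z (ys k z) \<ge> ps k z yf" using ysP[OF zX] yfY by auto
    have c: "ps k z (ys k z) \<le> M - \<rho> k / 2 * Pen z (ys k z)"
      using ps_le_f[of k z "ys k z"] M[OF zX w] by auto
    have "\<rho> k * Pen z (ys k z) \<le> 4 * M + \<sigma> k * B2" using a b c by linarith
    then show ?thesis using rho_pos[rule_format, of k]
      by (simp add: field_simps pos_le_divide_eq)
  qed
  have limsup: "eventually (\<lambda>k. pp k z \<le> phi Y f c z + \<epsilon>) sequentially" if zX: "z \<in> X" and ep: "\<epsilon> > 0" for z \<epsilon>
  proof -
    define p where "p = phi Y f c z"
    define K where "K = Y \<inter> f z -` {p + \<epsilon>..}"
    have "closed K" unfolding K_def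
      by (rule continuous_closed_preimage[OF fx_cont[OF zX] compact_imp_closed[OF Y(3)]]) simp
    then have Kc: "compact K" using compact_Int_closed[OF Y(3), of K] by (simp add: K_def Int_absorb1 inf.absorb2)
    show ?thesis
    proof (cases "K = {}")
      case True
      show ?thesis
      proof (rule always_eventually, rule allI)
        fix k
        have "ys k z \<in> Y" using ysP[OF zX] by auto
        then have "f z (ys k z) < p + \<epsilon>" using True by (auto simp: K_def)
        then show "pp k z \<le> phi Y f c z + \<epsilon>" using pp_f[OF zX, of k] by (simp add: p_def)
      qed
    next
      case False
      have Pe: "Pen z = (\<lambda>y. \<Sum>i\<in>UNIV. (max (c z y $ i) 0)\<^sup>2)" by (simp add: Pen_def norm_pos_sq fun_eq_iff)
      have ccv: "continuous_on Y (c z)"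
        using continuous_on_vec_lambda[of Y "\<lambda>i y. c z y $ i"] cx_cont[OF zX] by (simp add: vec_lambda_eta)
      have "continuous_on Y (Pen z)" unfolding Pe using ccv by (intro continuous_intros) auto
      then have Pc: "continuous_on K (Pen z)" by (rule continuous_on_subset) (auto simp: K_def)
      obtain y0 where y0: "y0 \<in> K" "\<forall>y\<in>K. Pen z y0 \<le> Pen z y"
        using continuous_attains_inf[OF Kc False Pc] by auto
      have dpos: "Pen z y0 > 0"
      proof (rule ccontr)
        assume "\<not> Pen z y0 > 0"
        then have "Pen z y0 = 0" using Pen_nn[of z y0] by simp
        then have "y0 \<in> Theta Y c z" using pen0_feas y0(1) by (auto simp: Theta_def K_def)
        then have "f z y0 \<le> p" using phi_ge[OF zX] by (simp add: p_def)
        then show False using y0(1) ep by (auto simp: K_def)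
      qed
      have "eventually (\<lambda>k. 2 * (M - p) / Pen z y0 \<le> \<rho> k) sequentially"
        using rho_lim by (simp add: filterlim_at_top)
      then show ?thesis
      proof (rule eventually_mono)
        fix k assume rk: "2 * (M - p) / Pen z y0 \<le> \<rho> k"
        then have rk2: "2 * (M - p) \<le> \<rho> k * Pen z y0" using dpos by (simp add: pos_divide_le_eq)
        define w where "w = ys k z"
        have wY: "w \<in> Y" using ysP[OF zX] by (auto simp: w_def)
        have "ps k z w \<le> p + \<epsilon>"
        proof (cases "w \<in> K")
          case True
          have "\<rho> k * Pen z y0 \<le> \<rho> k * Pen z w" using y0(2) True rho_pos[rule_format, of k]
            by (intro mult_left_mono) auto
          then show ?thesis using ps_le_f[of k z w] M[OF zX wY] rk2 ep by auto
        next
          case False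
          then have "f z w < p + \<epsilon>" using wY by (auto simp: K_def)
          then show ?thesis using ps_le_f2[of k z w] by simp
        qed
        then show "pp k z \<le> phi Y f c z + \<epsilon>" using pp_eq[OF zX, of k] by (simp add: p_def w_def)
      qed
    qed
  qed
  have lsc_seq: "eventually (\<lambda>j. t < phi Y f c (u j)) sequentially"
    if xb: "xb \<in> X" and t: "t < phi Y f c xb" and u: "u \<longlonglongrightarrow> xb" and uX: "\<forall>j. u j \<in> X" for u xb t
  proof -
    have "eventually (\<lambda>z. t < phi Y f c z) (at xb within X)" using lsc xb t by (simp add: lsc_on_def)
    then have "eventually (\<lambda>z. z \<noteq> xb \<longrightarrow> z \<in> X \<longrightarrow> t < phi Y f c z) (nhds xb)"
      by (simp add: eventually_at_filter)
    then have "eventually (\<lambda>z. z \<in> X \<longrightarrow> t < phi Y f c z) (nhds xb)"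
      by (rule eventually_mono) (use t in auto)
    then have "eventually (\<lambda>j. u j \<in> X \<longrightarrow> t < phi Y f c (u j)) sequentially"
      using u unfolding filterlim_iff by blast
    then show ?thesis using uX by (simp add: eventually_mono)
  qed
  have comp_ev: "eventually (\<lambda>j. P (r j)) sequentially"
    if "strict_mono r" "eventually P sequentially" for r :: "nat \<Rightarrow> nat" and P
    using filterlim_subseq[OF that(1)] that(2) by (simp add: filterlim_iff)
  have sig_half: "eventually (\<lambda>k. \<sigma> k / 2 * B2 < e) sequentially" if "e > 0" for e
  proof -
    have "(\<lambda>k. \<sigma> k / 2 * B2) \<longlonglongrightarrow> 0 / 2 * B2" by (intro tendsto_mult tendsto_divide sigma_lim tendsto_const) simp
    then show ?thesis using order_tendstoD(2) that by fastforce
  qed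
  have part1: "xbar \<in> X \<and> (\<forall>x'\<in>X. phi Y f c xbar \<le> phi Y f c x')"
    if r: "strict_mono r" and lim: "(x \<circ> r) \<longlonglongrightarrow> xbar" for xbar r
  proof
    show xbX: "xbar \<in> X"
      using closed_sequentially[OF compact_imp_closed[OF X(3)] _ lim] x_argmin by auto
    show "\<forall>x'\<in>X. phi Y f c xbar \<le> phi Y f c x'"
    proof
      fix x' assume x'X: "x' \<in> X"
      show "phi Y f c xbar \<le> phi Y f c x'"
      proof (rule ccontr)
        assume "\<not> ?thesis"
        then have lt: "phi Y f c x' < phi Y f c xbar" by simp
        define e where "e = (phi Y f c xbar - phi Y f c x') / 4"
        define t where "t = phi Y f c x' + 2 * e"
        have e0: "e > 0" using lt by (simp add: e_def)
        have tlt: "t < phi Y f c xbar" using lt by (simp add: t_def e_def field_simps)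
        have ev1: "eventually (\<lambda>j. t < phi Y f c (x (r j))) sequentially"
          using lsc_seq[OF xbX tlt, of "x \<circ> r"] lim x_argmin by (simp add: o_def)
        have ev4: "eventually (\<lambda>k. phi Y f c (x k) < t) sequentially"
          using eventually_conj[OF limsup[OF x'X e0] sig_half[OF e0]]
        proof (rule eventually_mono)
          fix k assume h: "pp k x' \<le> phi Y f c x' + e \<and> \<sigma> k / 2 * B2 < e"
          have "pp k (x k) \<le> pp k x'" using x_argmin x'X by (simp add: pp_def)
          then show "phi Y f c (x k) < t" using phi_le[of "x k" k] x_argmin h by (simp add: t_def)
        qed
        have "eventually (\<lambda>j. False) sequentially"
          using eventually_conj[OF ev1 comp_ev[OF r ev4]] by (rule eventually_mono) auto
        then show False by simp
      qed
    qed
  qed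
  have part2: "ybar \<in> Y \<and> (\<forall>i. c xbar ybar $ i \<le> 0) \<and>
               (\<forall>y\<in>Y. (\<forall>i. c xbar y $ i \<le> 0) \<longrightarrow> f xbar y \<le> f xbar ybar)"
    if r: "strict_mono r" and lim: "(x \<circ> r) \<longlonglongrightarrow> xbar" and s: "strict_mono s"
      and ylim: "((\<lambda>j. ystar Y f c (\<rho> (r j)) (\<sigma> (r j)) (x (r j))) \<circ> s) \<longlonglongrightarrow> ybar"
    for xbar r ybar s
  proof -
    define q where "q = r \<circ> s"
    have q: "strict_mono q" using r s by (simp add: q_def strict_mono_def)
    have xbX: "xbar \<in> X" using part1[OF r lim] by simp
    have xq: "(\<lambda>i. x (q i)) \<longlonglongrightarrow> xbar" using LIMSEQ_subseq_LIMSEQ[OF lim s] by (simp add: o_def q_def)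
    have yq: "(\<lambda>i. ys (q i) (x (q i))) \<longlonglongrightarrow> ybar" using ylim by (simp add: o_def ys_def q_def)
    have xqX: "\<forall>i. x (q i) \<in> X" using x_argmin by simp
    have yqY: "\<forall>i. ys (q i) (x (q i)) \<in> Y" using ysP xqX by blast
    have ybY: "ybar \<in> Y" using closed_sequentially[OF compact_imp_closed[OF Y(3)] _ yq] yqY by blast
    have pair: "(\<lambda>i. (x (q i), ys (q i) (x (q i)))) \<longlonglongrightarrow> (xbar, ybar)" by (rule tendsto_Pair[OF xq yq])
    have pairXY: "\<forall>\<^sub>F i in sequentially. (x (q i), ys (q i) (x (q i))) \<in> X \<times> Y"
      using xqX yqY by simp
    have flim: "(\<lambda>i. f (x (q i)) (ys (q i) (x (q i)))) \<longlonglongrightarrow> f xbar ybar"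
      using continuous_on_tendsto_compose[OF contf pair _ pairXY] xbX ybY by simp
    have clim: "(\<lambda>i. c (x (q i)) (ys (q i) (x (q i))) $ i0) \<longlonglongrightarrow> c xbar ybar $ i0" for i0
      using continuous_on_tendsto_compose[OF contc pair _ pairXY] xbX ybY by simp
    have rho_q: "filterlim (\<lambda>i. \<rho> (q i)) at_top sequentially"
      using filterlim_compose[OF rho_lim filterlim_subseq[OF q]] .
    have sig_q: "(\<lambda>i. \<sigma> (q i)) \<longlonglongrightarrow> 0" using LIMSEQ_subseq_LIMSEQ[OF sigma_lim q] by (simp add: o_def)
    have feas: "c xbar ybar $ i0 \<le> 0" for i0
    proof -
      have a: "(\<lambda>i. (max (c (x (q i)) (ys (q i) (x (q i))) $ i0) 0)\<^sup>2) \<longlonglongrightarrow> (max (c xbar ybar $ i0) 0)\<^sup>2"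
        by (intro tendsto_intros clim)
      have b: "(\<lambda>i. (4 * M + \<sigma> (q i) * B2) * inverse (\<rho> (q i))) \<longlonglongrightarrow> (4 * M + 0 * B2) * 0"
        by (intro tendsto_intros sig_q tendsto_inverse_0_at_top rho_q)
      have le: "(max (c (x (q i)) (ys (q i) (x (q i))) $ i0) 0)\<^sup>2 \<le> (4 * M + \<sigma> (q i) * B2) * inverse (\<rho> (q i))" for i
      proof -
        let ?v = "\<chi> j. max (c (x (q i)) (ys (q i) (x (q i))) $ j) 0"
        have "\<bar>?v $ i0\<bar> \<le> \<bar>norm ?v\<bar>" using component_le_norm_cart[of ?v i0] by simp
        then have "(?v $ i0)\<^sup>2 \<le> (norm ?v)\<^sup>2" by (simp only: abs_le_square_iff)
        then have "(max (c (x (q i)) (ys (q i) (x (q i))) $ i0) 0)\<^sup>2 \<le> Pen (x (q i)) (ys (q i) (x (q i)))"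
          by (simp add: Pen_def)
        then show ?thesis using Pen_bd[of "x (q i)" "q i"] xqX by fastforce
      qed
      have "(max (c xbar ybar $ i0) 0)\<^sup>2 \<le> (4 * M + 0 * B2) * 0"
        by (rule tendsto_le[OF trivial_limit_sequentially b a]) (simp add: le)
      then show ?thesis by (simp add: max_def split: if_splits)
    qed
    have opt: "f xbar y \<le> f xbar ybar" if yY: "y \<in> Y" and yf: "\<forall>i. c xbar y $ i \<le> 0" for y
    proof (rule ccontr)
      assume "\<not> ?thesis"
      then have lt1: "f xbar ybar < f xbar y" by simp
      have "f xbar y \<le> phi Y f c xbar" using phi_ge[OF xbX] yY yf by (simp add: Theta_def)
      define t where "t = (f xbar ybar + phi Y f c xbar) / 2"
      have t1: "t < phi Y f c xbar" and t2: "f xbar ybar < t"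
        using lt1 \<open>f xbar y \<le> phi Y f c xbar\<close> by (auto simp: t_def)
      have ev1: "eventually (\<lambda>i. t < phi Y f c (x (q i))) sequentially"
        using lsc_seq[OF xbX t1 xq xqX] .
      have "(\<lambda>i. f (x (q i)) (ys (q i) (x (q i))) + \<sigma> (q i) / 2 * B2) \<longlonglongrightarrow> f xbar ybar + 0 / 2 * B2"
        by (intro tendsto_add tendsto_mult tendsto_divide flim sig_q tendsto_const) simp
      then have ev2: "eventually (\<lambda>i. f (x (q i)) (ys (q i) (x (q i))) + \<sigma> (q i) / 2 * B2 < t) sequentially"
        using order_tendstoD(2) t2 by fastforce
      have "eventually (\<lambda>i. False) sequentially"
        using eventually_conj[OF ev1 ev2]
      proof (rule eventually_mono)
        fix i assume h: "t < phi Y f c (x (q i)) \<and> f (x (q i)) (ys (q i) (x (q i))) + \<sigma> (q i) / 2 * B2 < t"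
        have "phi Y f c (x (q i)) \<le> f (x (q i)) (ys (q i) (x (q i))) + \<sigma> (q i) / 2 * B2"
          using phi_le[of "x (q i)" "q i"] pp_f[of "x (q i)" "q i"] xqX by fastforce
        then show False using h by simp
      qed
      then show False by simp
    qed
    show ?thesis using ybY feas opt by blast
  qed
  show ?thesis using part1 part2 by blast
qed

end
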